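(* Let $G$ be a simple graph with $m$ edges and girth $g(G)\ge 4$ (i.e. $G$ has no triangles). For $k=2,3,4$ define $\xi_{k-1}(G)=\sum_{uv\in E(G)}M_1^k(G-\{u,v\})$ (so $\xi_1$ sums $M_1$, $\xi_2$ sums $F$, $\xi_3$ sums $M_1^4$ of $G-\{u,v\}$ over all edges $uv$). Then \begin{enumerate} \item $\xi_1(G)=(m+3)M_1(G)-F(G)-4M_2(G)-2m$; \item $\xi_2(G)=(m+3)F(G)-M_1^4(G)-3\alpha(G)+6M_2(G)-4M_1(G)+2m$; \item $\xi_3(G)=(m+4)M_1^4(G)-M_1^5(G)+5M_1(G)-2m-4\alpha_2(G)+6\alpha(G)-6F(G)-8M_2(G)$. \end{enumerate}
   Context: All graphs are finite, simple and undirected. $d_G(v)$ is the degree of $v$ in $G$; $G-\{u,v\}$ is the graph obtained by deleting the vertices $u,v$ and all incident edges. The girth $g(G)$ is the length of a shortest cycle (infinite if acyclic). $M_1^\alpha(G)=\sum_{v\in V(G)}d_G(v)^\alpha$ (exponent on degrees); $M_1(G)=M_1^2(G)$, $F(G)=M_1^3(G)$; $M_2(G)=\sum_{uv\in E(G)}d_G(u)d_G(v)$; $\alpha_\lambda(G)=\sum_{uv\in E(G)}d_G(u)d_G(v)\big[d_G(u)^\lambda+d_G(v)^\lambda\big]$, $\alpha(G)=\alpha_1(G)$. *)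

theory Defs
  imports Main
begin

definition simple_graph :: "'a set \<Rightarrow> 'a set set \<Rightarrow> bool" where
  "simple_graph V E \<longleftrightarrow> finite V \<and>
     (\<forall>e\<in>E. \<exists>u v. e = {u, v} \<and> u \<noteq> v \<and> u \<in> V \<and> v \<in> V)"

definition degree :: "'a set set \<Rightarrow> 'a \<Rightarrow> nat" where
  "degree E v = card {e \<in> E. v \<in> e}"

definition triangle_free :: "'a set set \<Rightarrow> bool" where
  "triangle_free E \<longleftrightarrow>
     \<not> (\<exists>u v w. u \<noteq> v \<and> v \<noteq> w \<and> u \<noteq> w \<and> {u, v} \<in> E \<and> {v, w} \<in> E \<and> {u, w} \<in> E)"

definition del_verts_V :: "'a set \<Rightarrow> 'a set \<Rightarrow> 'a set" where
  "del_verts_V V S = V - S"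

definition del_verts_E :: "'a set set \<Rightarrow> 'a set \<Rightarrow> 'a set set" where
  "del_verts_E E S = {e \<in> E. e \<inter> S = {}}"

definition M1p :: "nat \<Rightarrow> 'a set \<Rightarrow> 'a set set \<Rightarrow> int" where
  "M1p a V E = (\<Sum>v\<in>V. int (degree E v) ^ a)"

definition M2 :: "'a set set \<Rightarrow> int" where
  "M2 E = (\<Sum>e\<in>E. \<Prod>v\<in>e. int (degree E v))"

definition alpha_idx :: "nat \<Rightarrow> 'a set set \<Rightarrow> int" where
  "alpha_idx l E = (\<Sum>e\<in>E. (\<Prod>v\<in>e. int (degree E v)) * (\<Sum>v\<in>e. int (degree E v) ^ l))"

definition xi :: "nat \<Rightarrow> 'a set \<Rightarrow> 'a set set \<Rightarrow> int" where
  "xi k V E = (\<Sum>e\<in>E. M1p (k + 1) (del_verts_V V e) (del_verts_E E e))"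

end

theory Submission
  imports Defs
begin

definition ff :: "nat \<Rightarrow> int \<Rightarrow> int" where "ff k y = y^k - (y-1)^k"

definition SS :: "nat \<Rightarrow> 'a set \<Rightarrow> 'a set set \<Rightarrow> 'a \<Rightarrow> int" where
  "SS k V E x = (\<Sum>w\<in>V. if {x,w}\<in>E then ff k (int (degree E w)) else 0)"

lemma sg_finE: "simple_graph V E \<Longrightarrow> finite E"
proof -
  assume a: "simple_graph V E"
  have "E \<subseteq> Pow V"
  proof
    fix e assume "e \<in> E"
    then obtain u v where "e = {u,v}" "u \<in> V" "v \<in> V" using a unfolding simple_graph_def by meson
    then show "e \<in> Pow V" by simp
  qed
  moreover have "finite V" using a unfolding simple_graph_def by blast
  ultimately show ?thesis using finite_subset[of E "Pow V"] by simp
qed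

lemma sg_edge: "simple_graph V E \<Longrightarrow> e \<in> E \<Longrightarrow> \<exists>a b. e = {a,b} \<and> a \<noteq> b \<and> a \<in> V \<and> b \<in> V"
  unfolding simple_graph_def by blast

lemma sg_sub: "simple_graph V E \<Longrightarrow> e \<in> E \<Longrightarrow> e \<subseteq> V"
  using sg_edge[of V E e] by auto

lemma sg_loop: "simple_graph V E \<Longrightarrow> {a} \<notin> E"
  proof
  assume "simple_graph V E" "{a} \<in> E"
  then obtain u v where "{a} = {u,v}" "u \<noteq> v" unfolding simple_graph_def by blast
  then show False by (metis insert_iff singletonD)
qed

lemma L1:
  assumes "simple_graph V E"
  shows "(\<Sum>e\<in>E. \<Sum>x\<in>e. g x) = (\<Sum>x\<in>V. int (degree E x) * g x)"
proof -
  have fV: "finite V" using assms unfolding simple_graph_def by blast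
  have fE: "finite E" using sg_finE[OF assms] .
  have "(\<Sum>x\<in>V. int (degree E x) * g x) = (\<Sum>x\<in>V. \<Sum>e\<in>{e\<in>E. x\<in>e}. g x)"
    by (simp add: degree_def)
  also have "\<dots> = (\<Sum>x\<in>V. \<Sum>e\<in>E. if x\<in>e then g x else 0)"
    using fE by (simp add: sum.inter_filter[symmetric])
  also have "\<dots> = (\<Sum>e\<in>E. \<Sum>x\<in>V. if x\<in>e then g x else 0)"
    by (rule sum.swap)
  also have "\<dots> = (\<Sum>e\<in>E. \<Sum>x\<in>e. g x)"
  proof (rule sum.cong[OF refl])
    fix e assume "e \<in> E"
    then have "e \<subseteq> V" using sg_sub[OF assms] by blast
    then have "{x\<in>V. x\<in>e} = e" by blast
    then show "(\<Sum>x\<in>V. if x\<in>e then g x else 0) = (\<Sum>x\<in>e. g x)"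
      using fV by (simp add: sum.inter_filter[symmetric])
  qed
  finally show ?thesis by simp
qed

lemma L2:
  assumes "simple_graph V E"
  shows "(\<Sum>x\<in>V. \<Sum>w\<in>V. if {x,w}\<in>E then H x w else (0::int))
       = (\<Sum>e\<in>E. \<Sum>x\<in>e. \<Sum>w\<in>e. if x = w then 0 else H x w)"
proof -
  have fV: "finite V" using assms unfolding simple_graph_def by blast
  have fE: "finite E" using sg_finE[OF assms] .
  have "(\<Sum>x\<in>V. \<Sum>w\<in>V. if {x,w}\<in>E then H x w else (0::int))
      = (\<Sum>x\<in>V. \<Sum>w\<in>V. \<Sum>e\<in>E. if e = {x,w} then H x w else 0)"
    using fE by (simp add: sum.delta')
  also have "\<dots> = (\<Sum>x\<in>V. \<Sum>e\<in>E. \<Sum>w\<in>V. if e = {x,w} then H x w else 0)"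
    by (simp add: sum.swap[where A=V and B=E])
  also have "\<dots> = (\<Sum>e\<in>E. \<Sum>x\<in>V. \<Sum>w\<in>V. if e = {x,w} then H x w else 0)"
    by (rule sum.swap)
  also have "\<dots> = (\<Sum>e\<in>E. \<Sum>x\<in>e. \<Sum>w\<in>e. if x = w then 0 else H x w)"
  proof (rule sum.cong[OF refl])
    fix e assume eE: "e \<in> E"
    obtain a b where ab: "e = {a,b}" "a \<noteq> b" "a \<in> V" "b \<in> V" using sg_edge[OF assms eE] by blast
    have "\<And>x w. (e = {x,w}) = (x \<in> e \<and> w \<in> e \<and> x \<noteq> w)"
      using ab by (auto simp: doubleton_eq_iff)
    then have "(\<Sum>x\<in>V. \<Sum>w\<in>V. if e = {x,w} then H x w else 0)
        = (\<Sum>x\<in>V. \<Sum>w\<in>V. if x \<in> e \<and> w \<in> e \<and> x \<noteq> w then H x w else 0)" by simp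
    also have "\<dots> = (\<Sum>x\<in>V. if x \<in> e then (\<Sum>w\<in>V. if w \<in> e then (if x = w then 0 else H x w) else 0) else 0)"
      by (rule sum.cong[OF refl]) (auto intro!: sum.cong)
    also have "\<dots> = (\<Sum>x\<in>e. \<Sum>w\<in>e. if x = w then 0 else H x w)"
    proof -
      have eV: "{x\<in>V. x\<in>e} = e" using ab by blast
      have "\<And>x. (\<Sum>w\<in>V. if w \<in> e then (if x = w then 0 else H x w) else 0) = (\<Sum>w\<in>e. if x = w then 0 else H x w)"
        using fV eV by (simp add: sum.inter_filter[symmetric])
      then show ?thesis using fV eV by (simp add: sum.inter_filter[symmetric])
    qed
    finally show "(\<Sum>x\<in>V. \<Sum>w\<in>V. if e = {x,w} then H x w else 0)
        = (\<Sum>x\<in>e. \<Sum>w\<in>e. if x = w then 0 else H x w)" .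
  qed
  finally show ?thesis .
qed

lemma edge_term:
  assumes sg: "simple_graph V E" and tf: "triangle_free E" and eE: "e \<in> E"
  shows "M1p k (del_verts_V V e) (del_verts_E E e) = M1p k V E
     - (\<Sum>x\<in>e. int (degree E x)^k - ff k (int (degree E x)) + SS k V E x)"
proof -
  have fV: "finite V" using sg unfolding simple_graph_def by blast
  have fE: "finite E" using sg_finE[OF sg] .
  obtain a b where ab: "e = {a,b}" "a \<noteq> b" "a \<in> V" "b \<in> V" using sg_edge[OF sg eE] by blast
  define d where "d w = int (degree E w)" for w
  define ia where "ia w = (if {a,w}\<in>E then 1 else (0::int))" for w
  define ib where "ib w = (if {b,w}\<in>E then 1 else (0::int))" for w
  have deg: "int (degree (del_verts_E E e) w) = d w - ia w - ib w" if wV: "w \<in> V - e" for w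
  proof -
    have wa: "w \<noteq> a" "w \<noteq> b" using wV ab by auto
    define A where "A = {e'\<in>del_verts_E E e. w\<in>e'}"
    define B where "B = {x\<in>{{a,w},{b,w}}. x\<in>E}"
    have U: "{e'\<in>E. w\<in>e'} = A \<union> B"
    proof
      show "{e'\<in>E. w\<in>e'} \<subseteq> A \<union> B"
      proof
        fix e' assume h: "e' \<in> {e'\<in>E. w\<in>e'}"
        show "e' \<in> A \<union> B"
        proof (cases "e' \<inter> e = {}")
          case True then show ?thesis using h unfolding A_def del_verts_E_def by auto
        next
          case False
          obtain p q where pq: "e' = {p,q}" "p \<noteq> q" using sg_edge[OF sg] h by blast
          have "e' = {a,w} \<or> e' = {b,w}" using False pq h wa ab by auto
          then show ?thesis using h unfolding B_def by auto
        qed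
      qed
    next
      show "A \<union> B \<subseteq> {e'\<in>E. w\<in>e'}" unfolding A_def B_def del_verts_E_def by auto
    qed
    have D: "A \<inter> B = {}" unfolding A_def B_def del_verts_E_def using ab by auto
    have fA: "finite A" unfolding A_def del_verts_E_def using fE by auto
    have fB: "finite B" unfolding B_def by auto
    have cB: "int (card B) = ia w + ib w"
    proof -
      have ne: "{a,w} \<noteq> {b,w}" using ab wa by (auto simp: doubleton_eq_iff)
      have Beq: "B = (if {a,w}\<in>E then {{a,w}} else {}) \<union> (if {b,w}\<in>E then {{b,w}} else {})"
        unfolding B_def by auto
      show ?thesis unfolding Beq ia_def ib_def using ne
        by (cases "{a,w}\<in>E"; cases "{b,w}\<in>E") auto
    qed
    have "degree E w = card A + card B" unfolding degree_def using U D fA fB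
      by (simp add: card_Un_disjoint)
    moreover have "degree (del_verts_E E e) w = card A" unfolding degree_def A_def by simp
    ultimately show ?thesis using cB unfolding d_def by simp
  qed
  have notboth: "\<not> ({a,w}\<in>E \<and> {b,w}\<in>E)" if wV: "w \<in> V - e" for w
  proof
    assume h: "{a,w}\<in>E \<and> {b,w}\<in>E"
    have "w \<noteq> a" "w \<noteq> b" using wV ab by auto
    then show False using tf h ab eE unfolding triangle_free_def by (metis insert_commute)
  qed
  have pow: "(d w - ia w - ib w)^k = d w^k - ia w * ff k (d w) - ib w * ff k (d w)"
    if wV: "w \<in> V - e" for w
    using notboth[OF wV] unfolding ia_def ib_def ff_def by auto
  have "M1p k (del_verts_V V e) (del_verts_E E e)
      = (\<Sum>w\<in>V-e. d w^k - ia w * ff k (d w) - ib w * ff k (d w))"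
    unfolding M1p_def del_verts_V_def using deg pow by (auto intro!: sum.cong)
  also have "\<dots> = (\<Sum>w\<in>V-e. d w^k) - (\<Sum>w\<in>V-e. ia w * ff k (d w)) - (\<Sum>w\<in>V-e. ib w * ff k (d w))"
    by (simp add: sum_subtractf)
  also have "\<dots> = ((\<Sum>w\<in>V. d w^k) - (d a^k + d b^k))
      - ((\<Sum>w\<in>V. ia w * ff k (d w)) - (ia a * ff k (d a) + ia b * ff k (d b)))
      - ((\<Sum>w\<in>V. ib w * ff k (d w)) - (ib a * ff k (d a) + ib b * ff k (d b)))"
    using fV ab by (simp add: sum_diff)
  also have "(\<Sum>w\<in>V. ia w * ff k (d w)) = SS k V E a"
    unfolding SS_def ia_def d_def by (auto intro!: sum.cong)
  also have "(\<Sum>w\<in>V. ib w * ff k (d w)) = SS k V E b"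
    unfolding SS_def ib_def d_def by (auto intro!: sum.cong)
  finally have X: "M1p k (del_verts_V V e) (del_verts_E E e) =
     (\<Sum>w\<in>V. d w ^ k) - (d a ^ k + d b ^ k) -
     (SS k V E a - (ia a * ff k (d a) + ia b * ff k (d b))) -
     (SS k V E b - (ib a * ff k (d a) + ib b * ff k (d b)))" .
  have "ia a = 0" "ib b = 0" unfolding ia_def ib_def using sg_loop[OF sg] by auto
  moreover have "ia b = 1" "ib a = 1" unfolding ia_def ib_def using eE ab by (auto simp: insert_commute)
  ultimately show ?thesis using X unfolding M1p_def d_def using ab by simp
qed

lemma xi_gen:
  assumes sg: "simple_graph V E" and tf: "triangle_free E"
  shows "xi k V E = int (card E) * M1p (Suc k) V E - M1p (Suc (Suc k)) V E
     + (\<Sum>x\<in>V. int (degree E x) * ff (Suc k) (int (degree E x)))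
     - (\<Sum>e\<in>E. \<Sum>x\<in>e. \<Sum>w\<in>e. if x = w then 0 else int (degree E x) * ff (Suc k) (int (degree E w)))"
proof -
  define d where "d w = int (degree E w)" for w
  define g where "g x = d x^(Suc k) - ff (Suc k) (d x) + SS (Suc k) V E x" for x
  have "xi k V E = (\<Sum>e\<in>E. M1p (Suc k) V E - (\<Sum>x\<in>e. g x))"
    unfolding xi_def
  proof (rule sum.cong[OF refl])
    fix e assume "e \<in> E"
    show "M1p (k + 1) (del_verts_V V e) (del_verts_E E e) = M1p (Suc k) V E - (\<Sum>x\<in>e. g x)"
      using edge_term[OF sg tf \<open>e \<in> E\<close>, of "Suc k"] unfolding g_def d_def by simp
  qed
  also have "\<dots> = int (card E) * M1p (Suc k) V E - (\<Sum>e\<in>E. \<Sum>x\<in>e. g x)"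
    by (simp add: sum_subtractf)
  also have "(\<Sum>e\<in>E. \<Sum>x\<in>e. g x) = (\<Sum>x\<in>V. d x * g x)"
    using L1[OF sg] unfolding d_def by simp
  also have "\<dots> = (\<Sum>x\<in>V. d x ^ Suc (Suc k)) - (\<Sum>x\<in>V. d x * ff (Suc k) (d x))
       + (\<Sum>x\<in>V. d x * SS (Suc k) V E x)"
  proof -
    have "(\<Sum>x\<in>V. d x * g x) = (\<Sum>x\<in>V. d x ^ Suc (Suc k) - d x * ff (Suc k) (d x) + d x * SS (Suc k) V E x)"
      unfolding g_def by (rule sum.cong[OF refl]) (simp add: algebra_simps)
    then show ?thesis by (simp only: sum.distrib sum_subtractf)
  qed
  also have "(\<Sum>x\<in>V. d x * SS (Suc k) V E x)
     = (\<Sum>x\<in>V. \<Sum>w\<in>V. if {x,w}\<in>E then d x * ff (Suc k) (d w) else 0)"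
    unfolding SS_def d_def by (simp add: sum_distrib_left if_distrib cong: if_cong)
  also have "\<dots> = (\<Sum>e\<in>E. \<Sum>x\<in>e. \<Sum>w\<in>e. if x = w then 0 else d x * ff (Suc k) (d w))"
    by (rule L2[OF sg])
  finally show ?thesis unfolding d_def M1p_def by simp
qed

lemma xi_gen2:
  assumes sg: "simple_graph V E" and tf: "triangle_free E" and j: "j = Suc k" and jj: "jj = Suc j"
  shows "xi k V E = int (card E) * M1p j V E - M1p jj V E
     + (\<Sum>x\<in>V. int (degree E x) * ff j (int (degree E x)))
     - (\<Sum>e\<in>E. \<Sum>x\<in>e. \<Sum>w\<in>e. if x = w then 0 else int (degree E x) * ff j (int (degree E w)))"
  unfolding j jj by (rule xi_gen[OF sg tf])

lemma edge_cong:
  assumes sg: "simple_graph V E"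
    and h: "\<And>a b. a \<noteq> b \<Longrightarrow> {a,b} \<in> E \<Longrightarrow> K {a,b} = R {a,b}"
  shows "(\<Sum>e\<in>E. K e) = (\<Sum>e\<in>E. R e)"
proof (rule sum.cong[OF refl])
  fix e assume "e \<in> E"
  then obtain a b where "e = {a,b}" "a \<noteq> b" using sg_edge[OF sg] by blast
  then show "K e = R e" using h \<open>e \<in> E\<close> by blast
qed

lemma handshake:
  assumes sg: "simple_graph V E"
  shows "M1p 1 V E = 2 * int (card E)"
proof -
  have "M1p 1 V E = (\<Sum>x\<in>V. int (degree E x) * 1)" unfolding M1p_def by simp
  also have "\<dots> = (\<Sum>e\<in>E. \<Sum>x\<in>e. (1::int))" using L1[OF sg, of "\<lambda>x. 1"] by simp
  also have "\<dots> = (\<Sum>e\<in>E. 2)"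
    by (rule edge_cong[OF sg]) simp
  finally show ?thesis by simp
qed

lemma sumpow:
  assumes sg: "simple_graph V E"
  shows "(\<Sum>e\<in>E. \<Sum>x\<in>e. int (degree E x) ^ l) = M1p (Suc l) V E"
  using L1[OF sg] unfolding M1p_def by simp

lemma vsum:
  assumes "\<And>y. y * ff k y = c4 * y^4 + c3 * y^3 + c2 * y^2 + c1 * y^1"
  shows "(\<Sum>x\<in>V. int (degree E x) * ff k (int (degree E x)))
     = c4 * M1p 4 V E + c3 * M1p 3 V E + c2 * M1p 2 V E + c1 * M1p 1 V E"
  unfolding M1p_def assms by (simp add: sum.distrib sum_distrib_left)

lemma esum:
  assumes sg: "simple_graph V E"
    and h: "\<And>y z. y * ff k z + z * ff k y = c3 * (y*z) * (y^2 + z^2) + c2 * (y*z) * (y + z) + c1 * (y*z) + c0 * (y + z)"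
  shows "(\<Sum>e\<in>E. \<Sum>x\<in>e. \<Sum>w\<in>e. if x = w then 0 else int (degree E x) * ff k (int (degree E w)))
     = c3 * alpha_idx 2 E + c2 * alpha_idx 1 E + c1 * M2 E + c0 * M1p 2 V E"
proof -
  define d where "d w = int (degree E w)" for w
  have "(\<Sum>e\<in>E. \<Sum>x\<in>e. \<Sum>w\<in>e. if x = w then 0 else d x * ff k (d w))
     = (\<Sum>e\<in>E. c3 * ((\<Prod>v\<in>e. d v) * (\<Sum>v\<in>e. d v ^ 2)) + c2 * ((\<Prod>v\<in>e. d v) * (\<Sum>v\<in>e. d v ^ 1))
           + c1 * (\<Prod>v\<in>e. d v) + c0 * (\<Sum>v\<in>e. d v ^ 1))"
  proof (rule edge_cong[OF sg])
    fix a b assume "a \<noteq> b" "{a,b} \<in> E"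
    then show "(\<Sum>x\<in>{a,b}. \<Sum>w\<in>{a,b}. if x = w then 0 else d x * ff k (d w))
      = c3 * ((\<Prod>v\<in>{a,b}. d v) * (\<Sum>v\<in>{a,b}. d v ^ 2)) + c2 * ((\<Prod>v\<in>{a,b}. d v) * (\<Sum>v\<in>{a,b}. d v ^ 1))
           + c1 * (\<Prod>v\<in>{a,b}. d v) + c0 * (\<Sum>v\<in>{a,b}. d v ^ 1)"
      using h[of "d a" "d b"] by simp
  qed
  also have "\<dots> = c3 * alpha_idx 2 E + c2 * alpha_idx 1 E + c1 * M2 E + c0 * (\<Sum>e\<in>E. \<Sum>v\<in>e. d v ^ 1)"
    unfolding alpha_idx_def M2_def d_def by (simp add: sum.distrib sum_distrib_left)
  also have "(\<Sum>e\<in>E. \<Sum>v\<in>e. d v ^ 1) = M1p 2 V E" using sumpow[OF sg, of 1] unfolding d_def by (simp add: numeral_2_eq_2)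
  finally show ?thesis unfolding d_def .
qed

theorem lemma2p2:
  fixes V :: "'a set" and E :: "'a set set"
  assumes "simple_graph V E" and "triangle_free E"
  defines "m \<equiv> int (card E)"
  shows "(xi 1 V E = (m + 3) * M1p 2 V E - M1p 3 V E - 4 * M2 E - 2 * m) \<and>
         (xi 2 V E = (m + 3) * M1p 3 V E - M1p 4 V E - 3 * alpha_idx 1 E + 6 * M2 E
                    - 4 * M1p 2 V E + 2 * m) \<and>
         (xi 3 V E = (m + 4) * M1p 4 V E - M1p 5 V E + 5 * M1p 2 V E - 2 * m
                    - 4 * alpha_idx 2 E + 6 * alpha_idx 1 E - 6 * M1p 3 V E - 8 * M2 E)"
proof -
  have m2: "M1p 1 V E = 2 * m" using handshake[OF assms(1)] unfolding m_def .
  have A1: "xi 1 V E = (m + 3) * M1p 2 V E - M1p 3 V E - 4 * M2 E - 2 * m"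
  proof -
    have v: "(\<Sum>x\<in>V. int (degree E x) * ff 2 (int (degree E x)))
       = 0 * M1p 4 V E + 0 * M1p 3 V E + 2 * M1p 2 V E + (-1) * M1p 1 V E"
      by (rule vsum) (simp add: ff_def algebra_simps power2_eq_square)
    have e: "(\<Sum>e\<in>E. \<Sum>x\<in>e. \<Sum>w\<in>e. if x = w then 0 else int (degree E x) * ff 2 (int (degree E w)))
       = 0 * alpha_idx 2 E + 0 * alpha_idx 1 E + 4 * M2 E + (-1) * M1p 2 V E"
      by (rule esum[OF assms(1)]) (simp add: ff_def algebra_simps power2_eq_square)
    have x: "xi 1 V E = m * M1p 2 V E - M1p 3 V E
       + (\<Sum>x\<in>V. int (degree E x) * ff 2 (int (degree E x)))
       - (\<Sum>e\<in>E. \<Sum>x\<in>e. \<Sum>w\<in>e. if x = w then 0 else int (degree E x) * ff 2 (int (degree E w)))"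
      using xi_gen2[OF assms(1,2), of 2 1 3] unfolding m_def by simp
    show ?thesis using x v e m2 by (simp add: algebra_simps)
  qed
  have A2: "xi 2 V E = (m + 3) * M1p 3 V E - M1p 4 V E - 3 * alpha_idx 1 E + 6 * M2 E
                    - 4 * M1p 2 V E + 2 * m"
  proof -
    have v: "(\<Sum>x\<in>V. int (degree E x) * ff 3 (int (degree E x)))
       = 0 * M1p 4 V E + 3 * M1p 3 V E + (-3) * M1p 2 V E + 1 * M1p 1 V E"
      by (rule vsum) (simp add: ff_def algebra_simps power2_eq_square power3_eq_cube)
    have e: "(\<Sum>e\<in>E. \<Sum>x\<in>e. \<Sum>w\<in>e. if x = w then 0 else int (degree E x) * ff 3 (int (degree E w)))
       = 0 * alpha_idx 2 E + 3 * alpha_idx 1 E + (-6) * M2 E + 1 * M1p 2 V E"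
      by (rule esum[OF assms(1)]) (simp add: ff_def algebra_simps power2_eq_square power3_eq_cube)
    have x: "xi 2 V E = m * M1p 3 V E - M1p 4 V E
       + (\<Sum>x\<in>V. int (degree E x) * ff 3 (int (degree E x)))
       - (\<Sum>e\<in>E. \<Sum>x\<in>e. \<Sum>w\<in>e. if x = w then 0 else int (degree E x) * ff 3 (int (degree E w)))"
      using xi_gen2[OF assms(1,2), of 3 2 4] unfolding m_def by simp
    show ?thesis using x v e m2 by (simp add: algebra_simps)
  qed
  have A3: "xi 3 V E = (m + 4) * M1p 4 V E - M1p 5 V E + 5 * M1p 2 V E - 2 * m
                    - 4 * alpha_idx 2 E + 6 * alpha_idx 1 E - 6 * M1p 3 V E - 8 * M2 E"
  proof -
    have v: "(\<Sum>x\<in>V. int (degree E x) * ff 4 (int (degree E x)))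
       = 4 * M1p 4 V E + (-6) * M1p 3 V E + 4 * M1p 2 V E + (-1) * M1p 1 V E"
      by (rule vsum) (simp add: ff_def algebra_simps power2_eq_square power3_eq_cube power4_eq_xxxx)
    have e: "(\<Sum>e\<in>E. \<Sum>x\<in>e. \<Sum>w\<in>e. if x = w then 0 else int (degree E x) * ff 4 (int (degree E w)))
       = 4 * alpha_idx 2 E + (-6) * alpha_idx 1 E + 8 * M2 E + (-1) * M1p 2 V E"
      by (rule esum[OF assms(1)]) (simp add: ff_def algebra_simps power2_eq_square power3_eq_cube power4_eq_xxxx)
    have x: "xi 3 V E = m * M1p 4 V E - M1p 5 V E
       + (\<Sum>x\<in>V. int (degree E x) * ff 4 (int (degree E x)))
       - (\<Sum>e\<in>E. \<Sum>x\<in>e. \<Sum>w\<in>e. if x = w then 0 else int (degree E x) * ff 4 (int (degree E w)))"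
      using xi_gen2[OF assms(1,2), of 4 3 5] unfolding m_def by simp
    show ?thesis using x v e m2 by (simp add: algebra_simps)
  qed
  show ?thesis using A1 A2 A3 by blast
qed

end
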